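(* For $t\in[0,1]$ and $x\ge 0$ define \[ f_t(x)=(1-t)\int_0^{1}x^{t\alpha}\,d\alpha+t\,x^{t}\int_0^{1}x^{(1-t)\alpha}\,d\alpha \] (with the convention $0^0=1$). Then for all $x\ge 0$ and all $t\in[0,1]$, \[ x^t\le f_t(x)\le \tfrac12\left(x^t+1-t+tx\right). \]
   Context: For $t\in(0,1)$ and $x>0$, $x\neq1$, one has $f_t(x)=\frac{1}{\log x}\left(\frac{1-t}{t}(x^t-1)+\frac{t}{1-t}x^t(x^{1-t}-1)\right)$; $f_t$ is the representing function of the weighted logarithmic mean. *)

theory Defs
  imports "HOL-Analysis.Analysis"
begin

text \<open>Real power with the convention 0^0 = 1 (for x \<ge> 0): powr already gives
  x powr a for x > 0, and 0 powr a = 0; we override the exponent-0 case.\<close>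
definition pw :: "real \<Rightarrow> real \<Rightarrow> real" where
  "pw x a = (if a = 0 then 1 else x powr a)"

definition f_t :: "real \<Rightarrow> real \<Rightarrow> real" where
  "f_t t x = (1 - t) * integral {0..1} (\<lambda>\<alpha>. pw x (t * \<alpha>))
             + t * pw x t * integral {0..1} (\<lambda>\<alpha>. pw x ((1 - t) * \<alpha>))"

end

theory Submission
  imports Defs
begin

lemma lin_int: "integral {0..1} (\<lambda>a::real. c + d*a) = c + d/2"
proof -
  have "((\<lambda>a::real. c + d*a) has_integral ((c*1 + d*1^2/2) - (c*0 + d*0^2/2))) {0..1}"
  proof (rule fundamental_theorem_of_calculus)
    fix a :: real assume "a \<in> {0..1}"
    have "((\<lambda>a::real. c*a + d*a^2/2) has_real_derivative (c + d*a)) (at a within {0..1})"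
      by (auto intro!: derivative_eq_intros)
    then show "((\<lambda>a::real. c*a + d*a^2/2) has_vector_derivative (c + d*a)) (at a within {0..1})"
      by (simp add: has_real_derivative_iff_has_vector_derivative)
  qed simp
  then show ?thesis by (simp add: integral_unique)
qed

lemma pw_pos: "0 < x \<Longrightarrow> pw x a = exp (a * ln x)"
  by (simp add: pw_def powr_def)

lemma cont_int: "(\<lambda>a::real. exp (k * a * L)) integrable_on {0..1}"
  by (intro integrable_continuous_interval continuous_intros)

lemma exp_conv: "0 \<le> (a::real) \<Longrightarrow> a \<le> 1 \<Longrightarrow> exp (a * u) \<le> (1 - a) + a * exp u"
proof -
  assume h: "0 \<le> a" "a \<le> 1"
  have "exp ((1 - a) * 0 + a * u) \<le> (1 - a) * exp 0 + a * exp u"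
    using convex_onD[OF exp_convex, of a 0 u] h by simp
  then show ?thesis by simp
qed

theorem lemma2p3:
  fixes x t :: real
  assumes "0 \<le> x" and "0 \<le> t" and "t \<le> 1"
  shows "pw x t \<le> f_t t x \<and> f_t t x \<le> (pw x t + 1 - t + t * x) / 2"
proof (cases "x = 0")
  case True
  show ?thesis
  proof (cases "t = 0")
    case True
    then show ?thesis using \<open>x = 0\<close> by (simp add: f_t_def pw_def)
  next
    case False
    have "((\<lambda>a. 0::real) has_integral 0) {0..1::real}" by simp
    then have "((\<lambda>a. pw x (t * a)) has_integral 0) {0..1::real}"
      apply (rule has_integral_spike[rotated 2])
      apply (rule negligible_sing)
      using False True apply (auto simp: pw_def)
      done
    then have I: "integral {0..1} (\<lambda>\<alpha>. pw x (t * \<alpha>)) = 0" by (rule integral_unique)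
    have "f_t t x = 0" using I False True by (simp add: f_t_def pw_def)
    then show ?thesis using False True assms by (simp add: pw_def)
  qed
next
  case False
  then have xp: "0 < x" using assms by simp
  define L where "L = ln x"
  have ex: "exp L = x" using xp by (simp add: L_def)
  have e1: "\<And>a. pw x (t*a) = exp (t * a * L)" using xp by (simp add: pw_pos L_def)
  have e2: "\<And>a. pw x ((1-t)*a) = exp ((1-t) * a * L)" using xp by (simp add: pw_pos L_def)
  have et: "pw x t = exp (t*L)" using xp by (simp add: pw_pos L_def)
  define I1 where "I1 = integral {0..1} (\<lambda>a. exp (t * a * L))"
  define I2 where "I2 = integral {0..1} (\<lambda>a. exp ((1-t) * a * L))"
  have f: "f_t t x = (1-t) * I1 + t * exp (t*L) * I2"
    by (simp add: f_t_def e1 e2 et I1_def I2_def)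
  have U1: "I1 \<le> 1 + (exp (t*L) - 1)/2"
  proof -
    have "I1 \<le> integral {0..1} (\<lambda>a::real. 1 + (exp (t*L) - 1) * a)"
      unfolding I1_def
    proof (rule integral_le[OF cont_int])
      show "(\<lambda>a::real. 1 + (exp (t*L) - 1) * a) integrable_on {0..1}"
        by (intro integrable_continuous_interval continuous_intros)
      fix a :: real assume "a \<in> {0..1}"
      then show "exp (t * a * L) \<le> 1 + (exp (t*L) - 1) * a"
        using exp_conv[of a "t*L"] by (simp add: algebra_simps)
    qed
    then show ?thesis by (simp add: lin_int)
  qed
  have U2: "I2 \<le> 1 + (exp ((1-t)*L) - 1)/2"
  proof -
    have "I2 \<le> integral {0..1} (\<lambda>a::real. 1 + (exp ((1-t)*L) - 1) * a)"
      unfolding I2_def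
    proof (rule integral_le[OF cont_int])
      show "(\<lambda>a::real. 1 + (exp ((1-t)*L) - 1) * a) integrable_on {0..1}"
        by (intro integrable_continuous_interval continuous_intros)
      fix a :: real assume "a \<in> {0..1}"
      then show "exp ((1-t) * a * L) \<le> 1 + (exp ((1-t)*L) - 1) * a"
        using exp_conv[of a "(1-t)*L"] by (simp add: algebra_simps)
    qed
    then show ?thesis by (simp add: lin_int)
  qed
  have L1: "I1 \<ge> exp (t*L) - exp (t*L) * L * t / 2"
  proof -
    have "integral {0..1} (\<lambda>a::real. exp (t*L) + (exp (t*L) * L * t) * (a - 1)) \<le> I1"
      unfolding I1_def
    proof (rule integral_le[OF _ cont_int])
      show "(\<lambda>a::real. exp (t*L) + (exp (t*L) * L * t) * (a - 1)) integrable_on {0..1}"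
        by (intro integrable_continuous_interval continuous_intros)
      fix a :: real
      have "exp (t*L) * (1 + t*L*(a-1)) \<le> exp (t*L) * exp (t*L*(a-1))"
        by (rule mult_left_mono) (auto simp: exp_ge_add_one_self)
      also have "\<dots> = exp (t*a*L)" by (simp add: mult_exp_exp algebra_simps)
      finally show "exp (t*L) + (exp (t*L) * L * t) * (a - 1) \<le> exp (t * a * L)"
        by (simp add: algebra_simps)
    qed
    moreover have "(\<lambda>a::real. exp (t*L) + (exp (t*L) * L * t) * (a - 1))
        = (\<lambda>a. (exp (t*L) - exp (t*L) * L * t) + (exp (t*L) * L * t) * a)"
      by (auto simp: algebra_simps)
    ultimately have "integral {0..1} (\<lambda>a. (exp (t*L) - exp (t*L) * L * t) + (exp (t*L) * L * t) * a) \<le> I1"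
      by simp
    then show ?thesis unfolding lin_int by (simp add: algebra_simps)
  qed
  have L2: "I2 \<ge> 1 + (1-t)*L/2"
  proof -
    have "integral {0..1} (\<lambda>a::real. 1 + ((1-t)*L) * a) \<le> I2"
      unfolding I2_def
    proof (rule integral_le[OF _ cont_int])
      show "(\<lambda>a::real. 1 + ((1-t)*L) * a) integrable_on {0..1}"
        by (intro integrable_continuous_interval continuous_intros)
      fix a :: real
      show "1 + ((1-t)*L) * a \<le> exp ((1-t) * a * L)"
        using exp_ge_add_one_self[of "(1-t)*a*L"] by (simp add: algebra_simps)
    qed
    then show ?thesis by (simp add: lin_int)
  qed
  have prod: "exp (t*L) * exp ((1-t)*L) = x"
    using ex by (simp add: mult_exp_exp algebra_simps)
  have pos: "exp (t*L) > 0" by simp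
  have lo: "exp (t*L) \<le> (1-t) * I1 + t * exp (t*L) * I2"
  proof -
    have a: "(1-t) * (exp (t*L) - exp (t*L) * L * t / 2) \<le> (1-t) * I1"
      using L1 assms by (intro mult_left_mono) auto
    have b: "t * exp (t*L) * (1 + (1-t)*L/2) \<le> t * exp (t*L) * I2"
      using L2 assms pos by (intro mult_left_mono) auto
    have "exp (t*L) = (1-t) * (exp (t*L) - exp (t*L) * L * t / 2) + t * exp (t*L) * (1 + (1-t)*L/2)"
      by (simp add: algebra_simps)
    then show ?thesis using a b by linarith
  qed
  have hi: "(1-t) * I1 + t * exp (t*L) * I2 \<le> (exp (t*L) + 1 - t + t * x) / 2"
  proof -
    have a: "(1-t) * I1 \<le> (1-t) * (1 + (exp (t*L) - 1)/2)"
      using U1 assms by (intro mult_left_mono) auto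
    have b: "t * exp (t*L) * I2 \<le> t * exp (t*L) * (1 + (exp ((1-t)*L) - 1)/2)"
      using U2 assms pos by (intro mult_left_mono) auto
    have "(1-t) * (1 + (exp (t*L) - 1)/2) + t * exp (t*L) * (1 + (exp ((1-t)*L) - 1)/2)
        = (exp (t*L) + 1 - t + t * (exp (t*L) * exp ((1-t)*L))) / 2"
      by (simp add: field_simps)
    then show ?thesis using a b prod by simp
  qed
  show ?thesis using lo hi f et by simp
qed

end
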